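(* Let $G=(V,E)$ be a finite simple graph which is $S_{1,1,5}$-free, $K_4$-free, diamond-free and butterfly-free. Let $xy\in E$ and let $r$ be a vertex with $rx\in E$ and $ry\notin E$. For $i\ge 1$ let $N_i=\{z\in V:\operatorname{dist}_G(z,\{x,y\})=i\}$. Assume $N_2$ is an independent set, every vertex of $N_3$ has exactly one neighbor in $N_2$, and there is no triangle with one vertex in $N_3$ and two vertices in $N_4$. If $|N_2|\ge 5$ and $N_5\ne\emptyset$, then there is no induced path $(a,b,c)$ in $G[N_4\cup N_5]$ with at least one of its end-vertices $a,c$ in $N_5$.
   Context: $S_{1,1,5}$ is the tree with a center $u$ adjacent to $a$, $b$ and $z_1$, where $u,z_1,\dots,z_5$ is an induced path, and no other edges. A diamond is $K_4$ minus one edge; a butterfly consists of two disjoint edges (inducing $2K_2$) together with a vertex adjacent to all four of their endpoints. $\operatorname{dist}_G(z,\{x,y\})$ is the minimum of the distances from $z$ to $x$ and to $y$. *)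

theory Defs
  imports Main
begin

definition simple_graph :: "'a set \<Rightarrow> ('a \<Rightarrow> 'a \<Rightarrow> bool) \<Rightarrow> bool" where
  "simple_graph V E \<longleftrightarrow> finite V \<and> (\<forall>u v. E u v \<longrightarrow> u \<in> V \<and> v \<in> V)
     \<and> (\<forall>u v. E u v \<longrightarrow> E v u) \<and> (\<forall>u. \<not> E u u)"

definition contains_induced :: "'a set \<Rightarrow> ('a \<Rightarrow> 'a \<Rightarrow> bool) \<Rightarrow> nat set \<Rightarrow> (nat \<Rightarrow> nat \<Rightarrow> bool) \<Rightarrow> bool" where
  "contains_induced V E VH EH \<longleftrightarrow> (\<exists>f. inj_on f VH \<and> f ` VH \<subseteq> V \<and>
      (\<forall>u\<in>VH. \<forall>v\<in>VH. E (f u) (f v) \<longleftrightarrow> EH u v))"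

definition H_free :: "'a set \<Rightarrow> ('a \<Rightarrow> 'a \<Rightarrow> bool) \<Rightarrow> nat set \<Rightarrow> (nat \<Rightarrow> nat \<Rightarrow> bool) \<Rightarrow> bool" where
  "H_free V E VH EH \<longleftrightarrow> \<not> contains_induced V E VH EH"

definition sym_edges :: "(nat \<times> nat) set \<Rightarrow> nat \<Rightarrow> nat \<Rightarrow> bool" where
  "sym_edges S u v \<longleftrightarrow> (u, v) \<in> S \<or> (v, u) \<in> S"

(* S_{1,1,5}: centre u=0, leaves a=1, b=2, path u,z1..z5 = 0,3,4,5,6,7 *)
definition S115_V :: "nat set" where "S115_V = {0..<8}"
definition S115_E :: "nat \<Rightarrow> nat \<Rightarrow> bool" where
  "S115_E = sym_edges {(0,1),(0,2),(0,3),(3,4),(4,5),(5,6),(6,7)}"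

definition K4_V :: "nat set" where "K4_V = {0..<4}"
definition K4_E :: "nat \<Rightarrow> nat \<Rightarrow> bool" where "K4_E u v \<longleftrightarrow> u \<noteq> v"

(* diamond = K4 minus the edge {2,3} *)
definition diamond_V :: "nat set" where "diamond_V = {0..<4}"
definition diamond_E :: "nat \<Rightarrow> nat \<Rightarrow> bool" where
  "diamond_E = sym_edges {(0,1),(0,2),(0,3),(1,2),(1,3)}"

(* butterfly: edges 01 and 23 (inducing 2K2) plus vertex 4 adjacent to 0,1,2,3 *)
definition butterfly_V :: "nat set" where "butterfly_V = {0..<5}"
definition butterfly_E :: "nat \<Rightarrow> nat \<Rightarrow> bool" where
  "butterfly_E = sym_edges {(0,1),(2,3),(4,0),(4,1),(4,2),(4,3)}"

definition walk_to :: "('a \<Rightarrow> 'a \<Rightarrow> bool) \<Rightarrow> 'a \<Rightarrow> 'a set \<Rightarrow> nat \<Rightarrow> bool" where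
  "walk_to E z S n \<longleftrightarrow> (\<exists>xs. length xs = Suc n \<and> hd xs = z \<and> last xs \<in> S \<and>
      (\<forall>i<n. E (xs ! i) (xs ! Suc i)))"

definition dist_eq :: "('a \<Rightarrow> 'a \<Rightarrow> bool) \<Rightarrow> 'a \<Rightarrow> 'a set \<Rightarrow> nat \<Rightarrow> bool" where
  "dist_eq E z S i \<longleftrightarrow> walk_to E z S i \<and> (\<forall>j<i. \<not> walk_to E z S j)"

definition Nset :: "'a set \<Rightarrow> ('a \<Rightarrow> 'a \<Rightarrow> bool) \<Rightarrow> 'a \<Rightarrow> 'a \<Rightarrow> nat \<Rightarrow> 'a set" where
  "Nset V E x y i = {z \<in> V. dist_eq E z {x, y} i}"

end

theory Submission
  imports Defs
begin


lemma sg_sym: "simple_graph V E \<Longrightarrow> E u v \<Longrightarrow> E v u"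
  unfolding simple_graph_def by blast
lemma sg_irr: "simple_graph V E \<Longrightarrow> \<not> E u u"
  unfolding simple_graph_def by blast
lemma sg_V: "simple_graph V E \<Longrightarrow> E u v \<Longrightarrow> u \<in> V"
  unfolding simple_graph_def by blast

lemma noK4:
  assumes "simple_graph V E" "H_free V E K4_V K4_E"
    "E a b" "E a c" "E a d" "E b c" "E b d" "E c d"
  shows False
proof -
  have s: "\<And>u v. E u v \<Longrightarrow> E v u" and i: "\<And>u. \<not> E u u" and vv: "\<And>u v. E u v \<Longrightarrow> u \<in> V"
    using assms(1) unfolding simple_graph_def by blast+
  let ?f = "(!) [a,b,c,d]"
  have d: "distinct [a,b,c,d]" using assms(3-) i by auto
  have "contains_induced V E K4_V K4_E"
    unfolding contains_induced_def
  proof (intro exI conjI)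
    show "inj_on ?f K4_V" unfolding K4_V_def by (rule inj_on_nth[OF d]) auto
    show "?f ` K4_V \<subseteq> V" unfolding K4_V_def using assms(3-) vv s
      by (auto simp: atLeast0LessThan lessThan_Suc numeral_eq_Suc)
    show "\<forall>u\<in>K4_V. \<forall>v\<in>K4_V. E (?f u) (?f v) = K4_E u v"
      unfolding K4_V_def K4_E_def using assms(3-) s i
      by (auto simp: atLeast0LessThan lessThan_Suc numeral_eq_Suc)
  qed
  thus False using assms(2) unfolding H_free_def by blast
qed

lemma nodiamond:
  assumes "simple_graph V E" "H_free V E diamond_V diamond_E"
    "E a b" "E a c" "E a d" "E b c" "E b d" "\<not> E c d" "c \<noteq> d"
  shows False
proof -
  have s: "\<And>u v. E u v \<Longrightarrow> E v u" and i: "\<And>u. \<not> E u u" and vv: "\<And>u v. E u v \<Longrightarrow> u \<in> V"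
    using assms(1) unfolding simple_graph_def by blast+
  let ?f = "(!) [a,b,c,d]"
  have d: "distinct [a,b,c,d]" using assms(3-) i by auto
  have "contains_induced V E diamond_V diamond_E"
    unfolding contains_induced_def
  proof (intro exI conjI)
    show "inj_on ?f diamond_V" unfolding diamond_V_def by (rule inj_on_nth[OF d]) auto
    show "?f ` diamond_V \<subseteq> V" unfolding diamond_V_def using assms(3-) vv s
      by (auto simp: atLeast0LessThan lessThan_Suc numeral_eq_Suc)
    show "\<forall>u\<in>diamond_V. \<forall>v\<in>diamond_V. E (?f u) (?f v) = diamond_E u v"
      unfolding diamond_V_def diamond_E_def sym_edges_def using assms(3-) s i
      by (auto simp: atLeast0LessThan lessThan_Suc numeral_eq_Suc)
  qed
  thus False using assms(2) unfolding H_free_def by blast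
qed

lemma nobutterfly:
  assumes "simple_graph V E" "H_free V E butterfly_V butterfly_E"
    "E a b" "E c d" "E h a" "E h b" "E h c" "E h d" "\<not> E a c" "\<not> E a d" "\<not> E b c" "\<not> E b d"
  shows False
proof -
  have s: "\<And>u v. E u v \<Longrightarrow> E v u" and i: "\<And>u. \<not> E u u" and vv: "\<And>u v. E u v \<Longrightarrow> u \<in> V"
    using assms(1) unfolding simple_graph_def by blast+
  let ?f = "(!) [a,b,c,d,h]"
  have d: "distinct [a,b,c,d,h]" using assms(3-) i s by auto
  have "contains_induced V E butterfly_V butterfly_E"
    unfolding contains_induced_def
  proof (intro exI conjI)
    show "inj_on ?f butterfly_V" unfolding butterfly_V_def by (rule inj_on_nth[OF d]) auto
    show "?f ` butterfly_V \<subseteq> V" unfolding butterfly_V_def using assms(3-) vv s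
      by (auto simp: atLeast0LessThan lessThan_Suc numeral_eq_Suc)
    show "\<forall>u\<in>butterfly_V. \<forall>v\<in>butterfly_V. E (?f u) (?f v) = butterfly_E u v"
      unfolding butterfly_V_def butterfly_E_def sym_edges_def using assms(3-) s i
      by (auto simp: atLeast0LessThan lessThan_Suc numeral_eq_Suc)
  qed
  thus False using assms(2) unfolding H_free_def by blast
qed

lemma noS115:
  assumes "simple_graph V E" "H_free V E S115_V S115_E"
    "E u a" "E u b" "E u z1" "E z1 z2" "E z2 z3" "E z3 z4" "E z4 z5" "a \<noteq> b"
    "\<not> E a b" "\<not> E a z1" "\<not> E a z2" "\<not> E a z3" "\<not> E a z4" "\<not> E a z5"
    "\<not> E b z1" "\<not> E b z2" "\<not> E b z3" "\<not> E b z4" "\<not> E b z5"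
    "\<not> E u z2" "\<not> E u z3" "\<not> E u z4" "\<not> E u z5"
    "\<not> E z1 z3" "\<not> E z1 z4" "\<not> E z1 z5" "\<not> E z2 z4" "\<not> E z2 z5" "\<not> E z3 z5"
  shows False
proof -
  have s: "\<And>u v. E u v \<Longrightarrow> E v u" and i: "\<And>u. \<not> E u u" and vv: "\<And>u v. E u v \<Longrightarrow> u \<in> V"
    using assms(1) unfolding simple_graph_def by blast+
  let ?f = "(!) [u,a,b,z1,z2,z3,z4,z5]"
  have d: "distinct [u,a,b,z1,z2,z3,z4,z5]" using assms(3-) i s by auto
  have "contains_induced V E S115_V S115_E"
    unfolding contains_induced_def
  proof (intro exI conjI)
    show "inj_on ?f S115_V" unfolding S115_V_def by (rule inj_on_nth[OF d]) auto
    show "?f ` S115_V \<subseteq> V" unfolding S115_V_def using assms(3-) vv s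
      by (auto simp: atLeast0LessThan lessThan_Suc numeral_eq_Suc)
    show "\<forall>i\<in>S115_V. \<forall>j\<in>S115_V. E (?f i) (?f j) = S115_E i j"
      unfolding S115_V_def S115_E_def sym_edges_def using assms(3-) s i
      by (auto simp: atLeast0LessThan lessThan_Suc numeral_eq_Suc)
  qed
  thus False using assms(2) unfolding H_free_def by blast
qed



lemma walk_Cons: "walk_to E u S i \<Longrightarrow> E v u \<Longrightarrow> walk_to E v S (Suc i)"
  unfolding walk_to_def
proof (elim exE conjE)
  fix xs assume h: "length xs = Suc i" "hd xs = u" "last xs \<in> S" "\<forall>k<i. E (xs ! k) (xs ! Suc k)" "E v u"
  show "\<exists>xs. length xs = Suc (Suc i) \<and> hd xs = v \<and> last xs \<in> S \<and> (\<forall>k<Suc i. E (xs ! k) (xs ! Suc k))"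
  proof (intro exI[of _ "v # xs"] conjI allI impI)
    fix k assume "k < Suc i"
    then show "E ((v # xs) ! k) ((v # xs) ! Suc k)"
      using h by (cases k; cases xs) auto
  qed (use h in \<open>auto\<close>)
qed

lemma walk_tl: "walk_to E v S (Suc i) \<Longrightarrow> \<exists>u. E v u \<and> walk_to E u S i"
  unfolding walk_to_def
proof (elim exE conjE)
  fix xs assume h: "length xs = Suc (Suc i)" "hd xs = v" "last xs \<in> S" "\<forall>k<Suc i. E (xs ! k) (xs ! Suc k)"
  show "\<exists>u. E v u \<and> (\<exists>xs. length xs = Suc i \<and> hd xs = u \<and> last xs \<in> S \<and> (\<forall>k<i. E (xs ! k) (xs ! Suc k)))"
  proof (intro exI conjI)
    have ne: "xs \<noteq> []" using h(1) by auto
    show "E v (xs ! 1)" using h(4)[rule_format, of 0] h(2) hd_conv_nth[OF ne] by simp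
    show "length (tl xs) = Suc i" using h by simp
    show "hd (tl xs) = xs ! 1" using h(1) by (cases xs; cases "tl xs") auto
    show "last (tl xs) \<in> S" using h(1,3) by (cases xs) (auto split: if_splits)
    show "\<forall>k<i. E (tl xs ! k) (tl xs ! Suc k)" using h(1,4) by (auto simp: nth_tl)
  qed
qed

lemma walk0: "walk_to E z S 0 \<longleftrightarrow> z \<in> S"
  unfolding walk_to_def
proof
  assume "\<exists>xs. length xs = Suc 0 \<and> hd xs = z \<and> last xs \<in> S \<and> (\<forall>i<0. E (xs ! i) (xs ! Suc i))"
  then obtain xs where "length xs = Suc 0" "hd xs = z" "last xs \<in> S" by blast
  then show "z \<in> S" by (cases xs) auto
next
  assume "z \<in> S" then show "\<exists>xs. length xs = Suc 0 \<and> hd xs = z \<and> last xs \<in> S \<and> (\<forall>i<0. E (xs ! i) (xs ! Suc i))"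
    by (intro exI[of _ "[z]"]) auto
qed

locale G =
  fixes V :: "'a set" and E :: "'a \<Rightarrow> 'a \<Rightarrow> bool" and x y :: 'a
  assumes sg: "simple_graph V E"
    and fS: "H_free V E S115_V S115_E"
    and fK: "H_free V E K4_V K4_E"
    and fD: "H_free V E diamond_V diamond_E"
    and fB: "H_free V E butterfly_V butterfly_E"
    and xy: "E x y"
    and ind2: "\<forall>u\<in>Nset V E x y 2. \<forall>v\<in>Nset V E x y 2. \<not> E u v"
    and uniq3: "\<forall>z\<in>Nset V E x y 3. card {w \<in> Nset V E x y 2. E z w} = 1"
    and tri: "\<not> (\<exists>t\<in>Nset V E x y 3. \<exists>u\<in>Nset V E x y 4. \<exists>v\<in>Nset V E x y 4.
              E t u \<and> E t v \<and> E u v)"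
begin

abbreviation "N \<equiv> Nset V E x y"

lemma sym: "E u v \<Longrightarrow> E v u" using sg_sym[OF sg] .
lemma irr: "\<not> E u u" using sg_irr[OF sg] .
lemma inV: "E u v \<Longrightarrow> u \<in> V" using sg_V[OF sg] .

lemma swap: "G V E y x"
proof -
  have "Nset V E y x = Nset V E x y" unfolding Nset_def by (auto simp: insert_commute)
  then show ?thesis using sg fS fK fD fB xy ind2 uniq3 tri sym[OF xy]
    unfolding G_def by simp
qed

lemma far: "u \<in> N i \<Longrightarrow> v \<in> N j \<Longrightarrow> E v u \<Longrightarrow> j \<le> Suc i"
proof (rule ccontr)
  assume h: "u \<in> N i" "v \<in> N j" "E v u" "\<not> j \<le> Suc i"
  then have "walk_to E v {x,y} (Suc i)" using walk_Cons[of E u "{x,y}" i v] unfolding Nset_def dist_eq_def by blast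
  moreover have "\<forall>k<j. \<not> walk_to E v {x,y} k" using h(2) unfolding Nset_def dist_eq_def by blast
  ultimately show False using h(4) by auto
qed

lemma nadj: "u \<in> N i \<Longrightarrow> v \<in> N j \<Longrightarrow> Suc i < j \<or> Suc j < i \<Longrightarrow> \<not> E u v"
proof
  assume h: "u \<in> N i" "v \<in> N j" "Suc i < j \<or> Suc j < i" "E u v"
  have "j \<le> Suc i" using far[OF h(1,2) sym[OF h(4)]] .
  moreover have "i \<le> Suc j" using far[OF h(2,1) h(4)] .
  ultimately show False using h(3) by arith
qed

lemma down: "v \<in> N (Suc i) \<Longrightarrow> \<exists>u\<in>N i. E v u"
proof -
  assume v: "v \<in> N (Suc i)"
  then have "walk_to E v {x,y} (Suc i)" unfolding Nset_def dist_eq_def by simp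
  then obtain u where u: "E v u" "walk_to E u {x,y} i" using walk_tl[of E v "{x,y}" i] by blast
  have "\<forall>j<i. \<not> walk_to E u {x,y} j"
  proof (intro allI impI notI)
    fix j assume j: "j < i" "walk_to E u {x,y} j"
    have "walk_to E v {x,y} (Suc j)" using walk_Cons[OF j(2) u(1)] .
    moreover have "\<forall>k<Suc i. \<not> walk_to E v {x,y} k" using v unfolding Nset_def dist_eq_def by simp
    ultimately show False using j(1) by simp
  qed
  moreover have "u \<in> V" using inV[OF sym[OF u(1)]] .
  ultimately have "u \<in> N i" unfolding Nset_def dist_eq_def using u(2) by simp
  then show ?thesis using u(1) by (intro bexI)
qed

lemma uniqN: "z \<in> N i \<Longrightarrow> z \<in> N j \<Longrightarrow> i = j"
proof -
  assume h: "z \<in> N i" "z \<in> N j"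
  then have a: "walk_to E z {x,y} i" "\<forall>k<i. \<not> walk_to E z {x,y} k"
    "walk_to E z {x,y} j" "\<forall>k<j. \<not> walk_to E z {x,y} k" unfolding Nset_def dist_eq_def by blast+
  show "i = j"
  proof (rule ccontr)
    assume "i \<noteq> j"
    then have "i < j \<or> j < i" by arith
    then show False
    proof
      assume "i < j" then show False using a(1,4) by blast
    next
      assume "j < i" then show False using a(2,3) by blast
    qed
  qed
qed

lemma N0: "z \<in> N 0 \<longleftrightarrow> z = x \<or> z = y"
  unfolding Nset_def dist_eq_def using walk0[of E] inV[OF xy] inV[OF sym[OF xy]] by auto

lemma N1: "z \<in> N 1 \<longleftrightarrow> z \<in> V \<and> z \<noteq> x \<and> z \<noteq> y \<and> (E z x \<or> E z y)"
proof
  assume z: "z \<in> N 1"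
  then have "z \<noteq> x \<and> z \<noteq> y" using N0 uniqN by fastforce
  moreover obtain u where "u \<in> N 0" "E z u" using down[of z 0] z by auto
  ultimately show "z \<in> V \<and> z \<noteq> x \<and> z \<noteq> y \<and> (E z x \<or> E z y)" using N0 inV by auto
next
  assume h: "z \<in> V \<and> z \<noteq> x \<and> z \<noteq> y \<and> (E z x \<or> E z y)"
  have "walk_to E z {x,y} 1"
    using h walk_Cons[of E _ "{x,y}" 0 z] walk0[of E _ "{x,y}"] by auto
  moreover have "\<not> walk_to E z {x,y} 0" using h walk0[of E z "{x,y}"] by simp
  ultimately show "z \<in> N 1" unfolding Nset_def dist_eq_def using h by auto
qed

lemma uniq3': "z \<in> N 3 \<Longrightarrow> w \<in> N 2 \<Longrightarrow> w' \<in> N 2 \<Longrightarrow> E z w \<Longrightarrow> E z w' \<Longrightarrow> w = w'"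
proof -
  assume h: "z \<in> N 3" "w \<in> N 2" "w' \<in> N 2" "E z w" "E z w'"
  then have "card {w \<in> N 2. E z w} = 1" using uniq3 by blast
  then obtain a where "{w \<in> N 2. E z w} = {a}" using card_1_singletonE by blast
  then have "w \<in> {a}" "w' \<in> {a}" using h by blast+
  then show "w = w'" by simp
qed

lemma K4: "E a b \<Longrightarrow> E a c \<Longrightarrow> E a d \<Longrightarrow> E b c \<Longrightarrow> E b d \<Longrightarrow> E c d \<Longrightarrow> False"
  using noK4[OF sg fK] .
lemma DI: "E a b \<Longrightarrow> E a c \<Longrightarrow> E a d \<Longrightarrow> E b c \<Longrightarrow> E b d \<Longrightarrow> \<not> E c d \<Longrightarrow> c \<noteq> d \<Longrightarrow> False"
  using nodiamond[OF sg fD] .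
lemma BF: "E a b \<Longrightarrow> E c d \<Longrightarrow> E h a \<Longrightarrow> E h b \<Longrightarrow> E h c \<Longrightarrow> E h d \<Longrightarrow> \<not> E a c \<Longrightarrow> \<not> E a d \<Longrightarrow> \<not> E b c \<Longrightarrow> \<not> E b d \<Longrightarrow> False"
  using nobutterfly[OF sg fB] .

end

context G begin

lemma nsym: "\<not> E b a \<Longrightarrow> \<not> E a b" using sym by blast

lemma down1: "v \<in> N 1 \<Longrightarrow> \<exists>u\<in>N 0. E v u" using down[of v 0] by simp
lemma down2: "v \<in> N 2 \<Longrightarrow> \<exists>u\<in>N 1. E v u" using down[of v 1] by (simp add: numeral_eq_Suc)
lemma down3: "v \<in> N 3 \<Longrightarrow> \<exists>u\<in>N 2. E v u" using down[of v 2] by (simp add: numeral_eq_Suc)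
lemma down4: "v \<in> N 4 \<Longrightarrow> \<exists>u\<in>N 3. E v u" using down[of v 3] by (simp add: numeral_eq_Suc)
lemma down5: "v \<in> N 5 \<Longrightarrow> \<exists>u\<in>N 4. E v u" using down[of v 4] by (simp add: numeral_eq_Suc)
lemma hx: "x \<in> N 0" using N0 by simp
lemma hy: "y \<in> N 0" using N0 by simp
lemma ne_layer: "p \<in> N i \<Longrightarrow> q \<in> N j \<Longrightarrow> i \<noteq> j \<Longrightarrow> p \<noteq> q" using uniqN by blast
lemma n22: "v \<in> N 2 \<Longrightarrow> v' \<in> N 2 \<Longrightarrow> \<not> E v v'" using ind2 by blast
lemma n2u3: "v \<in> N 2 \<Longrightarrow> u3 \<in> N 3 \<Longrightarrow> E v u3 \<Longrightarrow> v' \<in> N 2 \<Longrightarrow> v' \<noteq> v \<Longrightarrow> \<not> E v' u3"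
  using uniq3'[of u3 v v'] sym by blast

lemma S1:
  assumes v: "v \<in> N 2" and u3: "u3 \<in> N 3" and u: "u \<in> N 4" and t: "t \<in> N 5" and s: "s \<in> N 5"
    and e: "E v u3" "E u3 u" "E u t" "E t s" "\<not> E u s"
    and z: "z \<in> N 1" and hv: "v' \<in> N 2" "E z v" "E z v'"
  shows "v' = v"
proof (rule ccontr)
  assume ne: "v' \<noteq> v"
  obtain z0 where z0: "z0 \<in> N 0" "E z z0" using down[of z 0] z by auto
  have n1: "\<not> E v' v" using ind2 v hv(1) by blast
  have n2: "\<not> E v' u3" using uniq3'[OF u3 v hv(1) sym[OF e(1)] sym] ne by blast
  have d: "z0 \<noteq> v'" using z0 hv(1) uniqN by fastforce
  show False
    by (rule noS115[OF sg fS, of z z0 v' v u3 u t s];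
        (fact | (rule sym, fact) | (rule nsym, fact) | (rule nadj, fact, fact, simp)))
qed

end

lemma four: assumes "4 \<le> card A" shows "\<exists>a b c d. a \<in> A \<and> b \<in> A \<and> c \<in> A \<and> d \<in> A \<and> distinct [a,b,c,d]"
proof -
  obtain T where T: "T \<subseteq> A" "card T = 4" using obtain_subset_with_card_n[OF assms] by blast
  have "card T = Suc (Suc (Suc (Suc 0)))" using T(2) by simp
  then obtain a b c d where h: "T = {a,b,c,d}" "distinct [a,b,c,d]" unfolding card_Suc_eq by auto
  have "a \<in> A" "b \<in> A" "c \<in> A" "d \<in> A" using T(1) h(1) by auto
  with h(2) show ?thesis by blast
qed
lemma four_but: assumes "5 \<le> card A"
  shows "\<exists>a b c d. a \<in> A - {v} \<and> b \<in> A - {v} \<and> c \<in> A - {v} \<and> d \<in> A - {v} \<and> distinct [a,b,c,d]"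
proof -
  have "finite A" using assms card.infinite by fastforce
  then have "4 \<le> card (A - {v})" using assms by (simp add: card_Diff_singleton_if; arith)
  then show ?thesis by (rule four)
qed


context G begin

lemma L3a:
  assumes v: "v \<in> N 2" and u3: "u3 \<in> N 3" and u: "u \<in> N 4" and t: "t \<in> N 5" and s: "s \<in> N 5"
    and e: "E v u3" "E u3 u" "E u t" "E t s" "\<not> E u s"
    and card: "5 \<le> card (N 2)"
    and u1: "u1 \<in> N 1" "E u1 x" "\<not> E u1 y" "E u1 v"
  shows False
proof -
  note hx = hx and hy = hy and xy = xy
  have yx: "E y x" using sym[OF xy] .
  have S1': "v' = v" if "z \<in> N 1" "v' \<in> N 2" "E z v" "E z v'" for z v'
    using S1[OF v u3 u t s e that] .
  have a1: "E q v" if q: "q \<in> N 1" "E q y" "\<not> E q x" "E u1 q" for q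
  proof (rule ccontr)
    assume nq: "\<not> E q v"
    have d: "x \<noteq> q" using ne_layer[OF hx q(1)] by simp
    show False by (rule noS115[OF sg fS, of u1 x q v u3 u t s]; (fact | (rule sym, fact) | (rule nsym, fact) | (rule nadj, fact, fact, simp)))
  qed
  have a2: "E q v" if q: "q \<in> N 1" "E q x" "\<not> E q y" "q \<noteq> u1" "\<not> E q u1" for q
  proof (rule ccontr)
    assume nq: "\<not> E q v"
    have d: "y \<noteq> q" using ne_layer[OF hy q(1)] by simp
    have q': "E x q" using sym[OF q(2)] .
    have u1': "E x u1" using sym[OF u1(2)] .
    show False by (rule noS115[OF sg fS, of x y q u1 v u3 u t]; (fact | (rule sym, fact) | (rule nsym, fact) | (rule nadj, fact, fact, simp)))
  qed
  have nwu1: "\<not> E z u1" if "E z x" "E z y" for z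
  proof
    assume "E z u1"
    have "y \<noteq> u1" using ne_layer[OF hy u1(1)] by simp
    show False using DI[of x z y u1] sym[OF that(1)] xy sym[OF u1(2)] that(2) \<open>E z u1\<close> u1(3) sym[of y u1] \<open>y \<noteq> u1\<close>
      by blast
  qed
  define Sp where "Sp z \<longleftrightarrow> z \<in> N 1 \<and> \<not> E z v \<and> E z x \<and> (E z y \<or> E z u1)" for z
  define Yt where "Yt z \<longleftrightarrow> z \<in> N 1 \<and> \<not> E z v \<and> E z y \<and> \<not> E z x \<and> \<not> E z u1" for z
  have cls: "Sp z \<or> Yt z" if z: "z \<in> N 1" "\<not> E z v" for z
  proof -
    have zu: "z \<noteq> u1" using z(2) u1(4) by blast
    have "E z x \<or> E z y" using z(1) N1 by blast
    moreover have "E z u1" if "E z x" "\<not> E z y" using a2[OF z(1) that zu] z(2) by blast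
    moreover have "\<not> E z u1" if "E z y" "\<not> E z x" using a1[OF z(1) that] z(2) sym by blast
    ultimately show ?thesis unfolding Sp_def Yt_def using z by blast
  qed
  have nU: "v' = v''" if z: "Sp z \<or> Yt z" and w: "v' \<in> N 2" "v'' \<in> N 2" "E z v'" "E z v''" for z v' v''
  proof (rule ccontr)
    assume ne: "v' \<noteq> v''"
    have zN: "z \<in> N 1" and zv: "\<not> E z v" using z unfolding Sp_def Yt_def by blast+
    have v'v: "v' \<noteq> v" "v'' \<noteq> v" using zv w by blast+
    have nu1: "\<not> E v' u1" "\<not> E v'' u1" using S1'[OF u1(1) _ u1(4)] w(1,2) v'v sym by blast+
    have n3: "\<not> E v' u3" "\<not> E v'' u3" using n2u3[OF v u3 e(1)] w(1,2) v'v by blast+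
    have n2: "\<not> E v' v''" "\<not> E v' v" "\<not> E v'' v" using n22 w(1,2) v by blast+
    have u1': "E x u1" using sym[OF u1(2)] .
    show False
    proof (cases "Sp z")
      case True
      then have zx: "E z x" unfolding Sp_def by blast
      show False
      proof (cases "E z u1")
        case True
        show False by (rule noS115[OF sg fS, of z v' v'' u1 v u3 u t]; (fact | (rule sym, fact) | (rule nsym, fact) | (rule nadj, fact, fact, simp)))
      next
        case False
        show False by (rule noS115[OF sg fS, of z v' v'' x u1 v u3 u]; (fact | (rule sym, fact) | (rule nsym, fact) | (rule nadj, fact, fact, simp)))
      qed
    next
      case False
      then have yt: "E z y" "\<not> E z x" "\<not> E z u1" using z unfolding Yt_def by blast+
      show False by (rule noS115[OF sg fS, of z v' v'' y x u1 v u3]; (fact | (rule sym, fact) | (rule nsym, fact) | (rule nadj, fact, fact, simp)))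
    qed
  qed
  have sp1a: False if "Sp z1" "Sp z2" "z1 \<noteq> z2" "E z1 u1" "\<not> E z2 u1" for z1 z2
  proof -
    have h: "E z1 x" "E z2 x" "E z2 y" using that unfolding Sp_def by blast+
    have "\<not> E z1 y" using nwu1[OF h(1)] that(4) by blast
    have "z1 \<in> N 1" using that(1) unfolding Sp_def by blast
    then have "y \<noteq> z1" using ne_layer[OF hy] by simp
    moreover have "\<not> E z1 z2"
      using DI[of x z2 y z1] sym[OF h(2)] xy sym[OF h(1)] h(3) sym[of z1 z2] \<open>\<not> E z1 y\<close> sym[of y z1] \<open>y \<noteq> z1\<close> by blast
    ultimately show False using \<open>\<not> E z1 y\<close> BF[of u1 z1 y z2 x] sym[OF u1(2)] sym[OF h(1)] xy sym[OF h(2)] that(4,5)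
      sym[of z1 u1] sym[of u1 y] u1(3) h(3) sym[of z2 y] sym[of u1 z2] by blast
  qed
  have sp1: "z1 = z2" if "Sp z1" "Sp z2" for z1 z2
  proof (rule ccontr)
    assume ne: "z1 \<noteq> z2"
    have h: "E z1 x" "E z2 x" using that unfolding Sp_def by blast+
    show False
    proof (cases "E z1 u1")
      case c1: True
      show False
      proof (cases "E z2 u1")
        case True
        then show False using K4[of x u1 z1 z2] DI[of x u1 z1 z2] sym[OF u1(2)] sym[OF h(1)] sym[OF h(2)]
          sym[OF c1] sym[OF True] ne by blast
      next
        case False then show False using sp1a[OF that ne c1] by blast
      qed
    next
      case c1: False
      show False
      proof (cases "E z2 u1")
        case True then show False using sp1a[OF that(2,1) _ True c1] ne by blast
      next
        case False
        then have "E z1 y" "E z2 y" using that c1 unfolding Sp_def by blast+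
        then show False using K4[of x y z1 z2] DI[of x y z1 z2] xy sym[OF h(1)] sym[OF h(2)] ne sym[of z1 y] sym[of z2 y] by blast
      qed
    qed
  qed
  have ytadj: "E a b" if "Yt a" "Yt b" "a \<noteq> b" for a b
  proof (rule ccontr)
    assume nab: "\<not> E a b"
    have ha: "a \<in> N 1" "\<not> E a v" "E y a" "\<not> E a x" "\<not> E a u1" using that(1) sym unfolding Yt_def by blast+
    have hb: "b \<in> N 1" "\<not> E b v" "E y b" "\<not> E b x" "\<not> E b u1" using that(2) sym unfolding Yt_def by blast+
    have u1': "E x u1" using sym[OF u1(2)] .
    show False by (rule noS115[OF sg fS, of y a b x u1 v u3 u]; (fact | (rule sym, fact) | (rule nsym, fact) | (rule nadj, fact, fact, simp)))
  qed
  have yt3: False if "Yt z1" "Yt z2" "Yt z3" "z1 \<noteq> z2" "z1 \<noteq> z3" "z2 \<noteq> z3" for z1 z2 z3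
  proof -
    have "E y z1" "E y z2" "E y z3" using that(1-3) sym unfolding Yt_def by blast+
    then show False using K4[of y z1 z2 z3] ytadj that by blast
  qed
  have nb: "\<exists>z. z \<in> N 1 \<and> E w z \<and> (Sp z \<or> Yt z)" if w: "w \<in> N 2 - {v}" for w
  proof -
    obtain z where z: "z \<in> N 1" "E w z" using down2[of w] w by auto
    have "\<not> E z v" using S1'[OF z(1) _ _ sym[OF z(2)]] w v by blast
    then show ?thesis using cls z by blast
  qed
  obtain a b c d where abcd: "a \<in> N 2 - {v}" "b \<in> N 2 - {v}" "c \<in> N 2 - {v}" "d \<in> N 2 - {v}"
    "distinct [a,b,c,d]" using four_but[OF card, of v] by blast
  obtain za where za: "za \<in> N 1" "E a za" "Sp za \<or> Yt za" using nb[OF abcd(1)] by blast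
  obtain zb where zb: "zb \<in> N 1" "E b zb" "Sp zb \<or> Yt zb" using nb[OF abcd(2)] by blast
  obtain zc where zc: "zc \<in> N 1" "E c zc" "Sp zc \<or> Yt zc" using nb[OF abcd(3)] by blast
  obtain zd where zd: "zd \<in> N 1" "E d zd" "Sp zd \<or> Yt zd" using nb[OF abcd(4)] by blast
  have dz: "p \<noteq> q" if "Sp p \<or> Yt p" "E i p" "E j q" "i \<in> N 2" "j \<in> N 2" "i \<noteq> j" for p q i j
    using nU[OF that(1) that(4,5)] sym that by blast
  have "za \<noteq> zb" "za \<noteq> zc" "za \<noteq> zd" "zb \<noteq> zc" "zb \<noteq> zd" "zc \<noteq> zd"
    using dz za zb zc zd abcd by (simp_all; blast)+
  then show False using sp1 yt3 za(3) zb(3) zc(3) zd(3) by metis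
qed

end

context G begin

lemma Nswap: "Nset V E y x = Nset V E x y" unfolding Nset_def by (auto simp: insert_commute)

lemma c_side:
  assumes v: "v \<in> N 2" and u3: "u3 \<in> N 3" and u: "u \<in> N 4" and t: "t \<in> N 5" and s: "s \<in> N 5"
    and e: "E v u3" "E u3 u" "E u t" "E t s" "\<not> E u s"
    and w: "w \<in> N 1" "E w x" "E w y" "E w v"
    and hA: "\<forall>z\<in>N 1. E z v \<longrightarrow> E z x \<and> E z y"
  shows "(\<forall>q1 q2. q1 \<in> N 1 \<and> E q1 x \<and> \<not> E q1 y \<and> q2 \<in> N 1 \<and> E q2 x \<and> \<not> E q2 y \<longrightarrow> q1 = q2) \<and>
    (\<forall>q v' v''. q \<in> N 1 \<and> E q x \<and> \<not> E q y \<and> v' \<in> N 2 \<and> v'' \<in> N 2 \<and> E q v' \<and> E q v'' \<longrightarrow> v' = v'')"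
proof -
  note hx = hx and hy = hy and xy = xy
  have x': "E x w" using sym[OF w(2)] .
  have qv: "\<not> E q v" if "q \<in> N 1" "E q x" "\<not> E q y" for q using hA that by blast
  have qw: "\<not> E q w" if q: "q \<in> N 1" "E q x" "\<not> E q y" for q
  proof
    assume qw: "E q w"
    have "y \<noteq> q" using ne_layer[OF hy q(1)] by simp
    then show False using DI[of x w y q] x' xy sym[OF q(2)] w(3) sym[OF qw] q(3) sym[of y q] by blast
  qed
  have P1: "q1 = q2" if q1: "q1 \<in> N 1" "E q1 x" "\<not> E q1 y" and q2: "q2 \<in> N 1" "E q2 x" "\<not> E q2 y" for q1 q2
  proof (rule ccontr)
    assume d: "q1 \<noteq> q2"
    have h: "\<not> E q1 v" "\<not> E q2 v" "\<not> E q1 w" "\<not> E q2 w" using qv qw q1 q2 by blast+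
    have xq: "E x q1" "E x q2" using sym q1(2) q2(2) by blast+
    show False
    proof (cases "E q1 q2")
      case True
      then show False using BF[of q1 q2 y w x] xq xy x' sym[OF w(3)] q1(3) q2(3) h by blast
    next
      case False
      show False by (rule noS115[OF sg fS, of x q1 q2 w v u3 u t]; (fact | (rule sym, fact) | (rule nsym, fact) | (rule nadj, fact, fact, simp)))
    qed
  qed
  have S1': "v' = v" if "z \<in> N 1" "v' \<in> N 2" "E z v" "E z v'" for z v'
    using S1[OF v u3 u t s e that] .
  have P2: "v' = v''" if q: "q \<in> N 1" "E q x" "\<not> E q y" and vv: "v' \<in> N 2" "v'' \<in> N 2" "E q v'" "E q v''" for q v' v''
  proof (rule ccontr)
    assume d: "v' \<noteq> v''"
    have h: "\<not> E q v" "\<not> E q w" using qv qw q by blast+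
    have v'v: "v' \<noteq> v" "v'' \<noteq> v" using h vv by blast+
    have nw: "\<not> E v' w" "\<not> E v'' w" using S1'[OF w(1) _ w(4)] vv(1,2) v'v sym by blast+
    have n3: "\<not> E v' u3" "\<not> E v'' u3" using n2u3[OF v u3 e(1)] vv(1,2) v'v by blast+
    have n2: "\<not> E v' v''" "\<not> E v' v" "\<not> E v'' v" using n22 vv(1,2) v by blast+
    show False by (rule noS115[OF sg fS, of q v' v'' x w v u3 u]; (fact | (rule sym, fact) | (rule nsym, fact) | (rule nadj, fact, fact, simp)))
  qed
  show ?thesis using P1 P2 by blast
qed

lemma L3c:
  assumes v: "v \<in> N 2" and u3: "u3 \<in> N 3" and u: "u \<in> N 4" and t: "t \<in> N 5" and s: "s \<in> N 5"
    and e: "E v u3" "E u3 u" "E u t" "E t s" "\<not> E u s"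
    and card: "5 \<le> card (N 2)"
    and w: "w \<in> N 1" "E w x" "E w y" "E w v"
    and hA: "\<forall>z\<in>N 1. E z v \<longrightarrow> E z x \<and> E z y"
  shows False
proof -
  have X: "(\<forall>q1 q2. q1 \<in> N 1 \<and> E q1 x \<and> \<not> E q1 y \<and> q2 \<in> N 1 \<and> E q2 x \<and> \<not> E q2 y \<longrightarrow> q1 = q2) \<and>
    (\<forall>q v' v''. q \<in> N 1 \<and> E q x \<and> \<not> E q y \<and> v' \<in> N 2 \<and> v'' \<in> N 2 \<and> E q v' \<and> E q v'' \<longrightarrow> v' = v'')"
    by (rule c_side[OF v u3 u t s e w hA])
  have hA': "\<forall>z\<in>N 1. E z v \<longrightarrow> E z y \<and> E z x" using hA by blast
  have Y: "(\<forall>q1 q2. q1 \<in> N 1 \<and> E q1 y \<and> \<not> E q1 x \<and> q2 \<in> N 1 \<and> E q2 y \<and> \<not> E q2 x \<longrightarrow> q1 = q2) \<and>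
    (\<forall>q v' v''. q \<in> N 1 \<and> E q y \<and> \<not> E q x \<and> v' \<in> N 2 \<and> v'' \<in> N 2 \<and> E q v' \<and> E q v'' \<longrightarrow> v' = v'')"
    using G.c_side[OF swap, unfolded Nswap, OF v u3 u t s e w(1,3,2,4) hA'] .
  have S1': "v' = v" if "z \<in> N 1" "v' \<in> N 2" "E z v" "E z v'" for z v'
    using S1[OF v u3 u t s e that] .
  have nb: "\<exists>z. z \<in> N 1 \<and> E a z \<and> ((E z x \<and> \<not> E z y) \<or> (E z y \<and> \<not> E z x))" if a: "a \<in> N 2 - {v}" for a
  proof -
    obtain z where z: "z \<in> N 1" "E a z" using down2[of a] a by auto
    have zv: "\<not> E z v" using S1'[OF z(1) _ _ sym[OF z(2)]] a v by blast
    have "z \<noteq> w" using zv w(4) by blast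
    then have "\<not> (E z x \<and> E z y)" using K4[of x y z w] DI[of x y z w] xy sym[of z x] sym[of z y] sym[OF w(2)] sym[OF w(3)]
      by blast
    moreover have "E z x \<or> E z y" using z(1) N1 by blast
    ultimately show ?thesis using z by blast
  qed
  obtain a b c d where abcd: "a \<in> N 2 - {v}" "b \<in> N 2 - {v}" "c \<in> N 2 - {v}" "d \<in> N 2 - {v}"
    "distinct [a,b,c,d]" using four_but[OF card, of v] by blast
  obtain za where za: "za \<in> N 1" "E a za" "(E za x \<and> \<not> E za y) \<or> (E za y \<and> \<not> E za x)" using nb[OF abcd(1)] by blast
  obtain zb where zb: "zb \<in> N 1" "E b zb" "(E zb x \<and> \<not> E zb y) \<or> (E zb y \<and> \<not> E zb x)" using nb[OF abcd(2)] by blast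
  obtain zc where zc: "zc \<in> N 1" "E c zc" "(E zc x \<and> \<not> E zc y) \<or> (E zc y \<and> \<not> E zc x)" using nb[OF abcd(3)] by blast
  obtain zd where zd: "zd \<in> N 1" "E d zd" "(E zd x \<and> \<not> E zd y) \<or> (E zd y \<and> \<not> E zd x)" using nb[OF abcd(4)] by blast
  have dz: "p \<noteq> q" if "p \<in> N 1" "(E p x \<and> \<not> E p y) \<or> (E p y \<and> \<not> E p x)" "E i p" "E j q" "i \<in> N 2" "j \<in> N 2" "i \<noteq> j" for p q i j
  proof
    assume "p = q"
    then have pi: "E p i" "E p j" using that(3,4) sym by blast+
    show False
    proof (cases "E p x \<and> \<not> E p y")
      case True
      then show False using X[THEN conjunct2, rule_format, of p i j] that(1,5,6,7) pi by blast
    next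
      case False
      then have "E p y \<and> \<not> E p x" using that(2) by blast
      then show False using Y[THEN conjunct2, rule_format, of p i j] that(1,5,6,7) pi by blast
    qed
  qed
  have ab: "a \<noteq> b" "a \<noteq> c" "a \<noteq> d" "b \<noteq> c" "b \<noteq> d" "c \<noteq> d" using abcd(5) by auto
  have N2: "a \<in> N 2" "b \<in> N 2" "c \<in> N 2" "d \<in> N 2" using abcd(1-4) by auto
  have D: "za \<noteq> zb" "za \<noteq> zc" "za \<noteq> zd" "zb \<noteq> zc" "zb \<noteq> zd" "zc \<noteq> zd"
    using dz[OF za(1,3) za(2) zb(2) N2(1,2) ab(1)] dz[OF za(1,3) za(2) zc(2) N2(1,3) ab(2)]
      dz[OF za(1,3) za(2) zd(2) N2(1,4) ab(3)] dz[OF zb(1,3) zb(2) zc(2) N2(2,3) ab(4)]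
      dz[OF zb(1,3) zb(2) zd(2) N2(2,4) ab(5)] dz[OF zc(1,3) zc(2) zd(2) N2(3,4) ab(6)] by auto
  have XX: "\<not> ((E p x \<and> \<not> E p y) \<and> (E q x \<and> \<not> E q y))" if "p \<in> N 1" "q \<in> N 1" "p \<noteq> q" for p q
    using X that by blast
  have YY: "\<not> ((E p y \<and> \<not> E p x) \<and> (E q y \<and> \<not> E q x))" if "p \<in> N 1" "q \<in> N 1" "p \<noteq> q" for p q
    using Y that by blast
  show False
    using XX[OF za(1) zb(1) D(1)] XX[OF za(1) zc(1) D(2)] XX[OF za(1) zd(1) D(3)]
      XX[OF zb(1) zc(1) D(4)] XX[OF zb(1) zd(1) D(5)] XX[OF zc(1) zd(1) D(6)]
      YY[OF za(1) zb(1) D(1)] YY[OF za(1) zc(1) D(2)] YY[OF za(1) zd(1) D(3)]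
      YY[OF zb(1) zc(1) D(4)] YY[OF zb(1) zd(1) D(5)] YY[OF zc(1) zd(1) D(6)]
      za(3) zb(3) zc(3) zd(3) by argo
qed

end

context G begin

lemma L3:
  assumes v: "v \<in> N 2" and u3: "u3 \<in> N 3" and u: "u \<in> N 4" and t: "t \<in> N 5" and s: "s \<in> N 5"
    and e: "E v u3" "E u3 u" "E u t" "E t s" "\<not> E u s"
    and card: "5 \<le> card (N 2)"
  shows False
proof -
  obtain u1 where u1: "u1 \<in> N 1" "E v u1" using down2[OF v] by blast
  show False
  proof (cases "\<exists>z. z \<in> N 1 \<and> E z x \<and> \<not> E z y \<and> E z v")
    case True
    then obtain z where "z \<in> N 1" "E z x" "\<not> E z y" "E z v" by blast
    then show False using L3a[OF v u3 u t s e card] by blast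
  next
    case c1: False
    show False
    proof (cases "\<exists>z. z \<in> N 1 \<and> E z y \<and> \<not> E z x \<and> E z v")
      case True
      then obtain z where "z \<in> N 1" "E z y" "\<not> E z x" "E z v" by blast
      then show False using G.L3a[OF swap, unfolded Nswap, OF v u3 u t s e card] by blast
    next
      case False
      then have hA: "\<forall>z\<in>N 1. E z v \<longrightarrow> E z x \<and> E z y" using c1 N1 by blast
      have "E u1 v" using sym[OF u1(2)] .
      then show False using L3c[OF v u3 u t s e card u1(1) _ _ _ hA] hA u1(1) by blast
    qed
  qed
qed

lemma nadjc: "c \<in> N 4 \<or> c \<in> N 5 \<Longrightarrow> w \<in> N j \<Longrightarrow> j \<le> 2 \<Longrightarrow> \<not> E c w"
  using nadj[of c 4 w j] nadj[of c 5 w j] by auto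

lemma Case1:
  assumes b: "b \<in> N 4" and a: "a \<in> N 5" and c: "c \<in> N 4 \<or> c \<in> N 5"
    and e: "E a b" "E b c" "\<not> E a c" "a \<noteq> c"
    and r: "r \<noteq> y" "E r x" "\<not> E r y"
  shows False
proof -
  note hx = hx and hy = hy and xy = xy
  obtain b3 where b3: "b3 \<in> N 3" "E b b3" using down4[OF b] by blast
  obtain b2 where b2: "b2 \<in> N 2" "E b3 b2" using down3[OF b3(1)] by blast
  have cb3: "\<not> E c b3"
  proof
    assume h: "E c b3"
    show False
    proof (cases "c \<in> N 4")
      case True
      then show False using tri b3 b e(2) h sym by blast
    next
      case False
      then have "c \<in> N 5" using c by blast
      then show False using nadj[OF _ b3(1), of c 5] h by simp
    qed
  qed
  have ab: "E b a" using sym[OF e(1)] .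
  have I: False if z: "z \<in> N 1" "E b2 z" "E z x" "\<not> E z y" for z
    by (rule noS115[OF sg fS, of b a c b3 b2 z x y]; (fact | (rule sym, fact) | (rule nsym, fact) | (rule nadj, fact, fact, simp) | (rule nadjc, fact, fact, simp) | (rule nsym, rule nadjc, fact, fact, simp)))
  have II: False if z: "z \<in> N 1" "E b2 z" "E z y" "\<not> E z x" for z
  proof -
    have yx: "E y x" using sym[OF xy] .
    show False by (rule noS115[OF sg fS, of b a c b3 b2 z y x]; (fact | (rule sym, fact) | (rule nsym, fact) | (rule nadj, fact, fact, simp) | (rule nadjc, fact, fact, simp) | (rule nsym, rule nadjc, fact, fact, simp)))
  qed
  have rN: "r \<in> N 1" using N1 inV[OF r(2)] r irr by blast
  obtain z where z: "z \<in> N 1" "E b2 z" using down2[OF b2(1)] by blast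
  show False
  proof (cases "E z x \<and> E z y")
    case True
    show False
    proof (cases "E b2 r")
      case True
      then show False using I[OF rN True r(2,3)] by blast
    next
      case False
      have "y \<noteq> r" using r(1) by blast
      then have zr: "\<not> E z r" using DI[of x z y r] True sym xy r(2,3) by blast
      have xz: "E z x" using True by blast
      have rx: "E x r" using sym[OF r(2)] .
      show False by (rule noS115[OF sg fS, of b a c b3 b2 z x r]; (fact | (rule sym, fact) | (rule nsym, fact) | (rule nadj, fact, fact, simp) | (rule nadjc, fact, fact, simp) | (rule nsym, rule nadjc, fact, fact, simp)))
    qed
  next
    case False
    then show False using I[OF z] II[OF z] z(1) N1 by blast
  qed
qed

lemma Case2:
  assumes b: "b \<in> N 5" and a: "a \<in> N 5" and c: "c \<in> N 4 \<or> c \<in> N 5"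
    and e: "E a b" "E b c" "\<not> E a c" "a \<noteq> c"
    and card: "5 \<le> card (N 2)"
  shows False
proof (cases "c \<in> N 4")
  case True
  obtain c3 where c3: "c3 \<in> N 3" "E c c3" using down4[OF True] by blast
  obtain c2 where c2: "c2 \<in> N 2" "E c3 c2" using down3[OF c3(1)] by blast
  have "\<not> E c a" using e(3) sym by blast
  then show False using L3[OF c2(1) c3(1) True b a sym[OF c2(2)] sym[OF c3(2)] sym[OF e(2)] sym[OF e(1)] _ card] by blast
next
  case False
  then have c5: "c \<in> N 5" using c by blast
  obtain b4 where b4: "b4 \<in> N 4" "E b b4" using down5[OF b] by blast
  obtain b3 where b3: "b3 \<in> N 3" "E b4 b3" using down4[OF b4(1)] by blast
  obtain b2 where b2: "b2 \<in> N 2" "E b3 b2" using down3[OF b3(1)] by blast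
  obtain b1 where b1: "b1 \<in> N 1" "E b2 b1" using down2[OF b2(1)] by blast
  obtain b0 where b0: "b0 \<in> N 0" "E b1 b0" using down1[OF b1(1)] by blast
  have t: "E b3 b4" "E b2 b3" "E b4 b" using sym b2 b3 b4 by blast+
  show False
  proof (cases "E b4 a")
    case ta: True
    show False
    proof (cases "E b4 c")
      case True
      then show False using DI[of b b4 a c] b4(2) sym[OF e(1)] e(2) ta e(3,4) by blast
    next
      case False
      then show False using L3[OF b2(1) b3(1) b4(1) b c5 t(2,1,3) e(2) _ card] by blast
    qed
  next
    case fa: False
    show False
    proof (cases "E b4 c")
      case True
      have "\<not> E b4 a" using fa .
      then show False using L3[OF b2(1) b3(1) b4(1) b a t(2,1,3) sym[OF e(1)] _ card] by blast
    next
      case False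
      have ab: "E b a" using sym[OF e(1)] .
      show False by (rule noS115[OF sg fS, of b a c b4 b3 b2 b1 b0]; (fact | (rule sym, fact) | (rule nsym, fact) | (rule nadj, fact, fact, simp)))
    qed
  qed
qed

lemma core:
  assumes a: "a \<in> N 5" and b: "b \<in> N 4 \<or> b \<in> N 5" and c: "c \<in> N 4 \<or> c \<in> N 5"
    and e: "E a b" "E b c" "\<not> E a c" "a \<noteq> c"
    and r: "r \<noteq> y" "E r x" "\<not> E r y"
    and card: "5 \<le> card (N 2)"
  shows False
  using b Case1[OF _ a c e r] Case2[OF _ a c e card] by blast

end

theorem lemma29:
  fixes V :: "'a set" and E :: "'a \<Rightarrow> 'a \<Rightarrow> bool" and x y r :: 'a
  assumes "simple_graph V E"
    and "H_free V E S115_V S115_E"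
    and "H_free V E K4_V K4_E"
    and "H_free V E diamond_V diamond_E"
    and "H_free V E butterfly_V butterfly_E"
    and "E x y"
    and "r \<noteq> y" and "E r x" and "\<not> E r y"
    and "\<forall>u\<in>Nset V E x y 2. \<forall>v\<in>Nset V E x y 2. \<not> E u v"
    and "\<forall>z\<in>Nset V E x y 3. card {w \<in> Nset V E x y 2. E z w} = 1"
    and "\<not> (\<exists>t\<in>Nset V E x y 3. \<exists>u\<in>Nset V E x y 4. \<exists>v\<in>Nset V E x y 4.
              E t u \<and> E t v \<and> E u v)"
    and "card (Nset V E x y 2) \<ge> 5"
    and "Nset V E x y 5 \<noteq> {}"
  shows "\<not> (\<exists>a b c. {a, b, c} \<subseteq> Nset V E x y 4 \<union> Nset V E x y 5 \<and>
              E a b \<and> E b c \<and> \<not> E a c \<and> a \<noteq> c \<and>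
              (a \<in> Nset V E x y 5 \<or> c \<in> Nset V E x y 5))"
proof
  interpret G V E x y
    using assms(1-6,10-12) unfolding G_def by blast
  assume "\<exists>a b c. {a, b, c} \<subseteq> Nset V E x y 4 \<union> Nset V E x y 5 \<and>
              E a b \<and> E b c \<and> \<not> E a c \<and> a \<noteq> c \<and>
              (a \<in> Nset V E x y 5 \<or> c \<in> Nset V E x y 5)"
  then obtain a b c where h: "a \<in> N 4 \<or> a \<in> N 5" "b \<in> N 4 \<or> b \<in> N 5" "c \<in> N 4 \<or> c \<in> N 5"
    "E a b" "E b c" "\<not> E a c" "a \<noteq> c" "a \<in> N 5 \<or> c \<in> N 5" by auto
  have card: "5 \<le> card (N 2)" using assms(13) by simp
  show False
  proof (cases "a \<in> N 5")
    case True
    then show False using core[OF True h(2,3) h(4-7) assms(7-9) card] by blast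
  next
    case False
    then have c5: "c \<in> N 5" using h(8) by blast
    have "\<not> E c a" using h(6) sym by blast
    then show False using core[OF c5 h(2,1) sym[OF h(5)] sym[OF h(4)] _ _ assms(7-9) card] h(7) by blast
  qed
qed


end
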